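(* Let $I_1\subset\mathbb{R}$ be an open interval and $I_2$ an open, relatively compact subinterval of $I_1$. For every integer $n\ge1$ and all $C_1,C_2>0$ there exists $\delta>0$ such that for every $C^1$ map $h:I_1\to\mathbb{R}$ with $\|h-\mathrm{id}\|_{1,I_1}<\delta$ and all $x,y\in I_2$ with $|y-x|<C_2|h^n(x)-x|$, we have $$|(h(y)-y)-(h(x)-x)|<C_1|h(x)-x|.$$
   Context: For an open set $J\subset\mathbb{R}$ and a $C^1$ map $u$ on $J$, $\|u\|_{1,J}=\sup_{x\in J}(|u(x)|+|u'(x)|)$. *)

theory Defs
  imports "HOL-Analysis.Analysis"
begin

definition C1_on :: "real set \<Rightarrow> (real \<Rightarrow> real) \<Rightarrow> bool" where
  "C1_on J u \<longleftrightarrow> (\<forall>x\<in>J. u differentiable (at x)) \<and> continuous_on J (deriv u)"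

definition C1_norm :: "real set \<Rightarrow> (real \<Rightarrow> real) \<Rightarrow> real" where
  "C1_norm J u = (SUP x\<in>J. \<bar>u x\<bar> + \<bar>deriv u x\<bar>)"

end

theory Submission
  imports Defs
begin

lemma lip_aux:
  fixes g :: "real \<Rightarrow> real"
  assumes I: "is_interval I" and dif: "\<And>z. z \<in> I \<Longrightarrow> g differentiable (at z)"
    and bd: "\<And>z. z \<in> I \<Longrightarrow> \<bar>deriv g z\<bar> \<le> d"
    and a: "a \<in> I" and b: "b \<in> I" and ab: "a < b"
  shows "\<bar>g b - g a\<bar> \<le> d * \<bar>b - a\<bar>"
proof -
  have "\<And>x. a \<le> x \<Longrightarrow> x \<le> b \<Longrightarrow> DERIV g x :> deriv g x"
  proof -
    fix x assume "a \<le> x" "x \<le> b"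
    then have "x \<in> I" using mem_is_interval_1_I[OF I a b] by blast
    then show "DERIV g x :> deriv g x" using dif DERIV_deriv_iff_real_differentiable by blast
  qed
  from MVT2[OF ab this] obtain z where z: "a < z" "z < b" "g b - g a = (b - a) * deriv g z" by blast
  have "z \<in> I" using z mem_is_interval_1_I[OF I a b] by auto
  then have "\<bar>deriv g z\<bar> \<le> d" by (rule bd)
  then show ?thesis using z ab by (simp add: abs_mult mult_right_mono mult.commute)
qed

lemma lip:
  fixes g :: "real \<Rightarrow> real"
  assumes I: "is_interval I" and dif: "\<And>z. z \<in> I \<Longrightarrow> g differentiable (at z)"
    and bd: "\<And>z. z \<in> I \<Longrightarrow> \<bar>deriv g z\<bar> \<le> d"
    and a: "a \<in> I" and b: "b \<in> I"
  shows "\<bar>g b - g a\<bar> \<le> d * \<bar>b - a\<bar>"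
proof -
  consider "a < b" | "a = b" | "b < a" by linarith
  then show ?thesis
  proof cases
    case 1 then show ?thesis using lip_aux[OF I dif bd a b] by blast
  next
    case 2 then show ?thesis by simp
  next
    case 3 then show ?thesis using lip_aux[OF I dif bd b a] by (simp add: abs_minus_commute)
  qed
qed

theorem lemma3p11:
  fixes I1 I2 :: "real set" and n :: nat and C1 C2 :: real
  assumes "open I1" and "is_interval I1"
    and "open I2" and "is_interval I2" and "I2 \<subseteq> I1"
    and "compact (closure I2)" and "closure I2 \<subseteq> I1"
    and "n \<ge> 1" and "C1 > 0" and "C2 > 0"
  shows "\<exists>\<delta>>0. \<forall>h :: real \<Rightarrow> real.
           C1_on I1 h
           \<and> bdd_above ((\<lambda>x. \<bar>h x - x\<bar> + \<bar>deriv (\<lambda>t. h t - t) x\<bar>) ` I1)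
           \<and> C1_norm I1 (\<lambda>t. h t - t) < \<delta>
           \<longrightarrow> (\<forall>x\<in>I2. \<forall>y\<in>I2. \<bar>y - x\<bar> < C2 * \<bar>(h ^^ n) x - x\<bar>
                 \<longrightarrow> \<bar>(h y - y) - (h x - x)\<bar> < C1 * \<bar>h x - x\<bar>)"
proof -
  obtain e where e: "e > 0" "\<And>x. x \<in> closure I2 \<Longrightarrow> ball x e \<subseteq> I1"
    using Heine_Borel_lemma[OF assms(6), of "{I1}"] assms(1,7) by auto
  define N where "N = real n * 2 ^ n"
  have N0: "N \<ge> 0" unfolding N_def by simp
  define \<delta> where "\<delta> = min 1 (min (e / (N + 1)) (C1 / (C2 * N + 1)))"
  have "C2 * N + 1 > 0" using N0 assms(10) by (smt (verit) mult_nonneg_nonneg)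
  then have d0: "\<delta> > 0" unfolding \<delta>_def using e N0 assms(9,10) by (simp add: add_pos_nonneg)
  have dle1: "\<delta> \<le> 1" unfolding \<delta>_def by simp
  have dNe: "\<delta> * N < e"
  proof -
    have "\<delta> \<le> e / (N + 1)" unfolding \<delta>_def by simp
    then have "\<delta> * (N + 1) \<le> e" using N0 by (simp add: pos_le_divide_eq)
    then show ?thesis using d0 by (simp add: algebra_simps)
  qed
  have dNC: "\<delta> * C2 * N < C1"
  proof -
    have "\<delta> \<le> C1 / (C2 * N + 1)" unfolding \<delta>_def by simp
    moreover have "C2 * N + 1 > 0" using N0 assms(10) by (smt (verit) mult_nonneg_nonneg)
    ultimately have "\<delta> * (C2 * N + 1) \<le> C1" by (simp add: pos_le_divide_eq)
    then show ?thesis using d0 by (simp add: algebra_simps)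
  qed
  show ?thesis
  proof (intro exI[of _ \<delta>] conjI allI impI ballI d0)
    fix h :: "real \<Rightarrow> real" and x y
    assume H: "C1_on I1 h \<and> bdd_above ((\<lambda>x. \<bar>h x - x\<bar> + \<bar>deriv (\<lambda>t. h t - t) x\<bar>) ` I1)
           \<and> C1_norm I1 (\<lambda>t. h t - t) < \<delta>"
      and x: "x \<in> I2" and y: "y \<in> I2" and xy: "\<bar>y - x\<bar> < C2 * \<bar>(h ^^ n) x - x\<bar>"
    define g where "g = (\<lambda>t. h t - t)"
    define d where "d = C1_norm I1 g"
    have dd: "d < \<delta>" using H unfolding d_def g_def by simp
    have gdif: "g differentiable (at z)" if "z \<in> I1" for z
      using H that unfolding C1_on_def g_def by (auto intro!: derivative_intros)
    have bnd: "\<bar>g z\<bar> + \<bar>deriv g z\<bar> \<le> d" if "z \<in> I1" for z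
      unfolding d_def C1_norm_def g_def using H that by (intro cSUP_upper) auto
    have gb: "\<bar>g z\<bar> \<le> d" "\<bar>deriv g z\<bar> \<le> d" if "z \<in> I1" for z
      using bnd[OF that] by auto
    have xI: "x \<in> I1" "y \<in> I1" using x y assms(5) by auto
    have xc: "x \<in> closure I2" using x closure_subset by blast
    define c where "c = \<bar>g x\<bar>"
    have cd: "c \<le> d" using gb(1)[OF xI(1)] unfolding c_def .
    have it: "k \<le> n \<longrightarrow> (h ^^ k) x \<in> I1 \<and> \<bar>(h ^^ k) x - x\<bar> \<le> c * (real k * 2 ^ k)" for k
    proof (induction k)
      case 0 then show ?case using xI by simp
    next
      case (Suc k)
      show ?case
      proof
        assume k: "Suc k \<le> n"
        with Suc have IH: "(h ^^ k) x \<in> I1" "\<bar>(h ^^ k) x - x\<bar> \<le> c * (real k * 2 ^ k)" by auto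
        let ?z = "(h ^^ k) x"
        have l: "\<bar>g ?z - g x\<bar> \<le> d * \<bar>?z - x\<bar>"
          using lip[OF assms(2) gdif gb(2) xI(1) IH(1)] by blast
        have "\<bar>(h ^^ Suc k) x - x\<bar> = \<bar>(?z - x) + g ?z\<bar>" unfolding g_def by simp
        also have "\<dots> \<le> \<bar>?z - x\<bar> + \<bar>g ?z\<bar>" by (rule abs_triangle_ineq)
        also have "\<dots> \<le> \<bar>?z - x\<bar> + (c + d * \<bar>?z - x\<bar>)" using l unfolding c_def by linarith
        also have "\<dots> \<le> 2 * \<bar>?z - x\<bar> + c" using dd dle1
          by (smt (verit) abs_ge_zero mult_right_mono mult_left_le_one_le)
        also have "\<dots> \<le> 2 * (c * (real k * 2 ^ k)) + c" using IH(2) by (smt (verit))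
        also have "\<dots> \<le> c * (real (Suc k) * 2 ^ Suc k)"
        proof -
          have "c \<ge> 0" unfolding c_def by simp
          moreover have "2 * (real k * 2 ^ k) + 1 \<le> real (Suc k) * 2 ^ Suc k"
          proof -
            have a: "(1::real) \<le> 2 ^ k" by simp
            have b: "real (Suc k) * 2 ^ Suc k = 2 * (real k * 2 ^ k) + 2 * 2 ^ k" by (simp add: algebra_simps)
            show ?thesis using a b by linarith
          qed
          ultimately have "c * (2 * (real k * 2 ^ k) + 1) \<le> c * (real (Suc k) * 2 ^ Suc k)"
            by (metis mult_left_mono)
          then show ?thesis by (simp add: algebra_simps)
        qed
        finally have B: "\<bar>(h ^^ Suc k) x - x\<bar> \<le> c * (real (Suc k) * 2 ^ Suc k)" .
        have "real (Suc k) * 2 ^ Suc k \<le> N" unfolding N_def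
        proof (rule mult_mono)
          show "(2::real) ^ Suc k \<le> 2 ^ n" using k by (intro power_increasing) auto
        qed (use k in auto)
        then have "c * (real (Suc k) * 2 ^ Suc k) \<le> \<delta> * N"
          using cd dd unfolding c_def
          by (smt (verit) abs_ge_zero mult_mono N0 of_nat_0_le_iff zero_le_power mult_nonneg_nonneg)
        with B dNe have "dist x ((h ^^ Suc k) x) < e" by (simp add: dist_real_def abs_minus_commute)
        then have "(h ^^ Suc k) x \<in> I1" using e(2)[OF xc] by auto
        with B show "(h ^^ Suc k) x \<in> I1 \<and> \<bar>(h ^^ Suc k) x - x\<bar> \<le> c * (real (Suc k) * 2 ^ Suc k)" by blast
      qed
    qed
    have an: "\<bar>(h ^^ n) x - x\<bar> \<le> c * N" using it[of n] unfolding N_def by simp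
    have yx: "\<bar>y - x\<bar> < C2 * (c * N)"
      using xy an assms(10) by (smt (verit) mult_left_mono)
    have cpos: "c > 0"
    proof (rule ccontr)
      assume "\<not> c > 0" then have "c = 0" unfolding c_def by simp
      then show False using yx by simp
    qed
    have "\<bar>g y - g x\<bar> \<le> d * \<bar>y - x\<bar>" using lip[OF assms(2) gdif gb(2) xI(1) xI(2)] .
    also have "\<dots> \<le> \<delta> * \<bar>y - x\<bar>" using dd by (simp add: mult_right_mono)
    also have "\<dots> \<le> \<delta> * (C2 * (c * N))" using yx d0 by (simp add: mult_left_mono)
    also have "\<dots> = (\<delta> * C2 * N) * c" by (simp add: algebra_simps)
    also have "\<dots> < C1 * c" using dNC cpos by simp
    finally show "\<bar>(h y - y) - (h x - x)\<bar> < C1 * \<bar>h x - x\<bar>" unfolding g_def c_def by simp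
  qed
qed

end
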